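(* Let $\mathbf{P}$ be a probability distribution on $\mathbb{R}^D$ whose samples lie in a bounded box $\prod_{d=1}^D[\lambda,\mu]$, and let $U>0$. Fix $0<a<b$ and a latent dimension $K$, and let $\mathcal{C}^\dagger_{\mathbf{P},\frac12 U}$ be the set of Spectrum VAEs $(\phi,\theta)$ (with these $a,b,K$) that are essentially compatible with $\mathbf{P}$ given $\frac12 U$. Define $$\mathrm{MDL}^\dagger_U=\inf_{(\phi,\theta)\in\mathcal{C}^\dagger_{\mathbf{P},\frac12U}}\log_2\Big(\sum_{m=1}^M|\mathcal{P}_m|_{\frac12U}\Big),$$ where, for each $(\phi,\theta)$, $\mathcal{P}_1,\dots,\mathcal{P}_M$ are all the spiking patterns of spectra $\phi(\mathbf{x})$ with $\mathbf{x}$ drawn from $\mathbf{P}$, and $|\mathcal{P}_m|_{\frac12U}$ is the $\frac12U$-complexity of $\mathcal{P}_m$ with respect to $\theta$. Then $\mathrm{MDL}^\dagger_U\ge\log_2(\mathcal{E}_{\mathbf{P},U})$, where $\mathcal{E}_{\mathbf{P},U}$ is the $U$-essence of $\mathbf{P}$.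
   Context: Spectrum VAE: given $0<a<b$, an encoder $\phi:\mathbb{R}^D\to\mathbb{R}^K$ first computes $\mathbf{z}_{\mathrm{pre}}\in\mathbb{R}^K$ and then sets, coordinatewise, $z_k=z_{\mathrm{pre},k}$ if $a\le z_{\mathrm{pre},k}\le b$, $z_k=b$ if $z_{\mathrm{pre},k}>b$, and $z_k=0$ if $z_{\mathrm{pre},k}<a$; the output $\mathbf{z}=\phi(\mathbf{x})$ is called a spectrum, so each $z_k\in\{0\}\cup[a,b]$. A decoder $\theta:\mathbb{R}^K\to\mathbb{R}^D$ produces $\tilde{\mathbf{x}}=\theta(\mathbf{z})$; distances are Euclidean $\|\cdot\|_2$. The spiking pattern of a spectrum $\mathbf{z}$ is the set $\{k: z_k\ge a\}$ (which is $\emptyset$ if $\mathbf{z}=0$). Patterns and robustness: a pattern is a set $\mathcal{P}=\{k_1,\dots,k_L\}\subseteq\{1,\dots,K\}$. A spectrum preserved by $\mathcal{P}$ is any $\mathbf{z}\in\mathbb{R}^K$ with $z_{k_l}\in[a,b]$ for $l=1,\dots,L$ and all other coordinates zero (for $\mathcal{P}=\emptyset$ this is only the zero vector). Given $\alpha_{k_1},\dots,\alpha_{k_L}>0$ and perturbations $\epsilon_{k_l}\in[-\alpha_{k_l},\alpha_{k_l}]$ (i.e. in the support of $\mathcal{U}(-\alpha_{k_l},\alpha_{k_l})$), the perturbed spectrum $\tilde{\mathbf{z}}$ has $\tilde z_{k_l}=\min(b,\max(a,z_{k_l}+\epsilon_{k_l}))$ and zero elsewhere. The decoder $\theta$ is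 $U$-robust w.r.t. $\mathcal{P}$ with the ($U$-qualified) boundaries $\{\alpha_{k_l}\}$ if $\|\theta(\mathbf{z})-\theta(\tilde{\mathbf{z}})\|_2\le U$ for every spectrum $\mathbf{z}$ preserved by $\mathcal{P}$ and every such perturbation. For such boundaries let $Q_{k_l}$ be the smallest integer larger than $(b-a)/(2\alpha_{k_l})$; divide $[a,b]$ in coordinate $k_l$ into $Q_{k_l}$ equal pieces and use their midpoints as quantization scales; the $U$-representation set is the set of the $\prod_{l=1}^LQ_{k_l}$ spectra preserved by $\mathcal{P}$ whose $k_l$-coordinates are quantization scales (size $1$ for $\mathcal{P}=\emptyset$). The $U$-complexity $|\mathcal{P}|_U$ is the minimum size of a $U$-representation set over all $U$-qualified choices of boundaries, and $|\mathcal{P}|_U=\infty$ if $\theta$ is not $U$-robust w.r.t. $\mathcal{P}$ for any boundaries. Essential compatibility: $(\phi,\theta)$ is essentially compatible with $\mathbf{P}$ given $U'$ if every sample $\mathbf{x}$ drawn from $\mathbf{P}$ satisfies $\|\mathbf{x}-\theta(\phi(\mathbf{x}))\|_2\le U'$. $U$-essence: $\mathcal{E}_{\mathbf{P},U}$ is the minimum cardinality of a finite set $S\subset\mathbb{R}^D$ such that every sample $\mathbf{x}$ drawn from $\mathbf{P}$ has some $\hat{\mathbf{x}}\in S$ with $\|\mathbf{x}-\hat{\mathbf{x}}\|_2\le U$. *)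

theory Defs
  imports "HOL-Probability.Probability" "HOL-Library.Extended_Nat"
begin

text \<open>Samples drawn from a distribution P: the points of its (topological) support.\<close>
definition samples :: "('a::metric_space) measure \<Rightarrow> 'a set" where
  "samples P = {x. \<forall>e>0. emeasure P (ball x e) > 0}"

definition spec_clip :: "real \<Rightarrow> real \<Rightarrow> real \<Rightarrow> real" where
  "spec_clip a b t = (if t > b then b else if t < a then 0 else t)"

definition spectrum_encoder ::
  "real \<Rightarrow> real \<Rightarrow> (real^'d::finite \<Rightarrow> real^'k::finite) \<Rightarrow> bool" where
  "spectrum_encoder a b phi \<longleftrightarrow>
     (\<exists>zpre :: real^'d::finite \<Rightarrow> real^'k::finite. \<forall>x. phi x = (\<chi> k. spec_clip a b (zpre x $ k)))"

definition spiking_pattern :: "real \<Rightarrow> real^'k::finite \<Rightarrow> 'k set" where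
  "spiking_pattern a z = {k. z $ k \<ge> a}"

definition preserved :: "real \<Rightarrow> real \<Rightarrow> 'k set \<Rightarrow> real^'k::finite \<Rightarrow> bool" where
  "preserved a b Pt z \<longleftrightarrow>
     (\<forall>k\<in>Pt. a \<le> z $ k \<and> z $ k \<le> b) \<and> (\<forall>k. k \<notin> Pt \<longrightarrow> z $ k = 0)"

definition perturb :: "real \<Rightarrow> real \<Rightarrow> 'k set \<Rightarrow> real^'k::finite \<Rightarrow> ('k \<Rightarrow> real) \<Rightarrow> real^'k::finite" where
  "perturb a b Pt z eps = (\<chi> k. if k \<in> Pt then min b (max a (z $ k + eps k)) else 0)"

definition robust ::
  "real \<Rightarrow> real \<Rightarrow> (real^'k::finite \<Rightarrow> real^'d::finite) \<Rightarrow> real \<Rightarrow> 'k set \<Rightarrow> ('k \<Rightarrow> real) \<Rightarrow> bool" where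
  "robust a b theta U Pt alpha \<longleftrightarrow>
     (\<forall>k\<in>Pt. alpha k > 0) \<and>
     (\<forall>z eps. preserved a b Pt z \<longrightarrow> (\<forall>k\<in>Pt. -alpha k \<le> eps k \<and> eps k \<le> alpha k) \<longrightarrow>
        norm (theta z - theta (perturb a b Pt z eps)) \<le> U)"

definition quant_num :: "real \<Rightarrow> real \<Rightarrow> real \<Rightarrow> nat" where
  "quant_num a b al = nat (\<lfloor>(b - a) / (2 * al)\<rfloor> + 1)"

definition rep_set_size :: "real \<Rightarrow> real \<Rightarrow> 'k set \<Rightarrow> ('k \<Rightarrow> real) \<Rightarrow> nat" where
  "rep_set_size a b Pt alpha = (\<Prod>k\<in>Pt. quant_num a b (alpha k))"

text \<open>U-complexity; infinity if theta is not U-robust for any boundaries.\<close>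
definition complexity ::
  "real \<Rightarrow> real \<Rightarrow> (real^'k::finite \<Rightarrow> real^'d::finite) \<Rightarrow> real \<Rightarrow> 'k set \<Rightarrow> enat" where
  "complexity a b theta U Pt =
     Inf {enat (rep_set_size a b Pt alpha) | alpha. robust a b theta U Pt alpha}"

definition ess_compatible ::
  "(real^'d::finite) measure \<Rightarrow> real \<Rightarrow> (real^'d::finite \<Rightarrow> real^'k::finite) \<Rightarrow> (real^'k::finite \<Rightarrow> real^'d::finite) \<Rightarrow> bool" where
  "ess_compatible P U' phi theta \<longleftrightarrow> (\<forall>x\<in>samples P. norm (x - theta (phi x)) \<le> U')"

definition essence :: "(real^'d::finite) measure \<Rightarrow> real \<Rightarrow> nat" where
  "essence P U = (LEAST n. \<exists>S. finite S \<and> card S = n \<and>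
        (\<forall>x\<in>samples P. \<exists>y\<in>S. norm (x - y) \<le> U))"

definition mdl_cost ::
  "(real^'d::finite) measure \<Rightarrow> real \<Rightarrow> real \<Rightarrow> real \<Rightarrow> (real^'d::finite \<Rightarrow> real^'k::finite) \<Rightarrow> (real^'k::finite \<Rightarrow> real^'d::finite) \<Rightarrow> ereal" where
  "mdl_cost P a b U' phi theta =
     (let s = (\<Sum>Pt\<in>{spiking_pattern a (phi x) | x. x \<in> samples P}. complexity a b theta U' Pt)
      in if s = \<infinity> then \<infinity> else ereal (log 2 (real (the_enat s))))"

definition MDL_dagger ::
  "(real^'d::finite) measure \<Rightarrow> real \<Rightarrow> real \<Rightarrow> real \<Rightarrow> 'k::finite itself \<Rightarrow> ereal" where
  "MDL_dagger P a b U (_ :: 'k itself) =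
     Inf {mdl_cost P a b (U/2) phi theta | (phi :: real^'d::finite \<Rightarrow> real^'k::finite) theta.
            spectrum_encoder a b phi \<and> ess_compatible P (U/2) phi theta}"

end

theory Submission
  imports Defs
begin

lemma grid_exists:
  fixes t :: real and Q :: nat
  assumes "Q > 0" "0 \<le> t" "t \<le> real Q"
  shows "\<exists>j<Q. \<bar>t - (real j + 1/2)\<bar> \<le> 1/2"
proof (cases "t = real Q")
  case True
  then show ?thesis using assms by (intro exI[of _ "Q - 1"]) (auto simp: of_nat_diff)
next
  case False
  define j where "j = nat \<lfloor>t\<rfloor>"
  have "real j \<le> t" "t < real j + 1" using assms unfolding j_def by linarith+
  moreover have "real j < real Q" using False assms \<open>real j \<le> t\<close> by linarith
  then have "j < Q" by simp
  moreover have "\<bar>t - (real j + 1/2)\<bar> \<le> 1/2" unfolding abs_le_iff using calculation by linarith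
  ultimately show ?thesis by blast
qed

lemma approx:
  assumes "alpha > 0" "a < b" "a \<le> z" "z \<le> b"
  shows "\<exists>j<quant_num a b alpha.
     \<bar>z - (a + (real j + 1/2) * (b - a) / real (quant_num a b alpha))\<bar> \<le> alpha \<and>
     a \<le> a + (real j + 1/2) * (b - a) / real (quant_num a b alpha) \<and>
     a + (real j + 1/2) * (b - a) / real (quant_num a b alpha) \<le> b"
proof -
  define Q where "Q = quant_num a b alpha"
  define r where "r = (b - a) / (2 * alpha)"
  have r0: "r > 0" using assms unfolding r_def by auto
  have QQ: "real Q = of_int (\<lfloor>r\<rfloor> + 1)" unfolding Q_def quant_num_def r_def[symmetric]
    using r0 by simp
  have Qr: "real Q > r" using QQ by linarith
  have Qpos: "Q > 0" using Qr r0 by (cases Q) auto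
  define h where "h = (b - a) / real Q"
  have h0: "h > 0" using assms Qpos unfolding h_def by auto
  have hal: "h / 2 < alpha"
  proof -
    have "b - a < 2 * alpha * real Q" using Qr assms unfolding r_def
      by (simp add: field_simps)
    then show ?thesis unfolding h_def using Qpos by (simp add: field_simps)
  qed
  define t where "t = (z - a) / h"
  have t0: "0 \<le> t" using assms h0 unfolding t_def by auto
  have tQ: "t \<le> real Q" using assms h0 Qpos unfolding t_def h_def by (simp add: field_simps)
  obtain j where j: "j < Q" "\<bar>t - (real j + 1/2)\<bar> \<le> 1/2" using grid_exists[OF Qpos t0 tQ] by blast
  have ceq: "(real j + 1/2) * (b - a) / real Q = (real j + 1/2) * h" unfolding h_def by simp
  have zt: "z = a + t * h" using h0 unfolding t_def by simp
  have e1: "z - (a + (real j + 1/2) * h) = (t - (real j + 1/2)) * h"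
    unfolding zt by (simp add: algebra_simps)
  have "\<bar>z - (a + (real j + 1/2) * h)\<bar> = \<bar>t - (real j + 1/2)\<bar> * h"
    unfolding e1 abs_mult using h0 by simp
  also have "\<dots> \<le> (1/2) * h" using j(2) h0 by (intro mult_right_mono) auto
  also have "\<dots> = h / 2" by simp
  finally have d: "\<bar>z - (a + (real j + 1/2) * h)\<bar> \<le> alpha" using hal by linarith
  have "(real j + 1/2) * h \<le> real Q * h" using j(1) h0
    by (intro mult_right_mono) auto
  also have "real Q * h = b - a" unfolding h_def using Qpos by simp
  finally have u: "(real j + 1/2) * h \<le> b - a" .
  have l: "0 \<le> (real j + 1/2) * h" using h0 by simp
  show ?thesis unfolding Q_def[symmetric] using j(1) d u l ceq by (intro exI[of _ j]) auto
qed

definition grid :: "real \<Rightarrow> real \<Rightarrow> 'k set \<Rightarrow> ('k \<Rightarrow> real) \<Rightarrow> ('k \<Rightarrow> nat) \<Rightarrow> real^'k::finite" where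
  "grid a b Pt alpha f = (\<chi> k. if k \<in> Pt then
      a + (real (f k) + 1/2) * (b - a) / real (quant_num a b (alpha k)) else 0)"

lemma cover:
  fixes theta :: "real^'k::finite \<Rightarrow> real^'d::finite"
  assumes rob: "robust a b theta U Pt alpha" and pres: "preserved a b Pt z" and ab: "a < b"
  shows "\<exists>f\<in>PiE Pt (\<lambda>k. {..<quant_num a b (alpha k)}).
           norm (theta z - theta (grid a b Pt alpha f)) \<le> U"
proof -
  let ?c = "\<lambda>k j. a + (real j + 1/2) * (b - a) / real (quant_num a b (alpha k))"
  let ?P = "\<lambda>k j. j < quant_num a b (alpha k) \<and> \<bar>z $ k - ?c k j\<bar> \<le> alpha k \<and> a \<le> ?c k j \<and> ?c k j \<le> b"
  have ex: "\<exists>j. ?P k j" if "k \<in> Pt" for k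
  proof -
    have "alpha k > 0" using rob that unfolding robust_def by blast
    moreover have "a \<le> z $ k" "z $ k \<le> b" using pres that unfolding preserved_def by auto
    ultimately show ?thesis using approx[of "alpha k" a b "z $ k"] ab by blast
  qed
  define f where "f k = (if k \<in> Pt then SOME j. ?P k j else undefined)" for k
  have fP: "?P k (f k)" if "k \<in> Pt" for k
  proof -
    have "?P k (SOME j. ?P k j)" by (rule someI_ex[OF ex[OF that]])
    then show ?thesis unfolding f_def using that by (simp only: if_True)
  qed
  have fin: "f \<in> PiE Pt (\<lambda>k. {..<quant_num a b (alpha k)})" using fP unfolding f_def by auto
  define q where "q = grid a b Pt alpha f"
  have qk: "\<And>k. q $ k = (if k \<in> Pt then ?c k (f k) else 0)" unfolding q_def grid_def by simp
  have qpres: "preserved a b Pt q" unfolding preserved_def qk using fP by auto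
  define eps where "eps k = z $ k - q $ k" for k
  have epsb: "\<forall>k\<in>Pt. - alpha k \<le> eps k \<and> eps k \<le> alpha k" 
  proof
    fix k assume k: "k \<in> Pt"
    have "\<bar>z $ k - q $ k\<bar> \<le> alpha k" using fP[OF k] unfolding qk using k by (simp only: if_True)
    then show "- alpha k \<le> eps k \<and> eps k \<le> alpha k" unfolding eps_def by (simp add: abs_le_iff)
  qed
  have "perturb a b Pt q eps = z"
    unfolding perturb_def eps_def using pres unfolding preserved_def
    by (simp add: vec_eq_iff)
  then have "norm (theta q - theta z) \<le> U" using rob qpres epsb unfolding robust_def by metis
  then have "norm (theta z - theta q) \<le> U" by (simp only: norm_minus_commute)
  then show ?thesis using fin unfolding q_def by blast
qed

lemma enat_Inf_attained:
  fixes A :: "enat set"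
  assumes "A \<noteq> {}" shows "Inf A \<in> A"
  using assms unfolding Inf_enat_def by (auto intro: LeastI)

theorem theorem1:
  fixes P :: "(real^'d) measure" and lam mu U a b :: real
  assumes "prob_space P" and "sets P = sets borel"
    and "samples P \<subseteq> {x. \<forall>d. lam \<le> x $ d \<and> x $ d \<le> mu}"
    and "U > 0" and "0 < a" and "a < b"
  shows "MDL_dagger P a b U TYPE('k::finite) \<ge> ereal (log 2 (real (essence P U)))"
proof -
  have "ereal (log 2 (real (essence P U))) \<le> mdl_cost P a b (U/2) phi theta"
    if enc: "spectrum_encoder a b phi" and comp: "ess_compatible P (U/2) phi theta"
    for phi :: "real^'d \<Rightarrow> real^'k" and theta
  proof -
    define PS where "PS = {spiking_pattern a (phi x) | x. x \<in> samples P}"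
    have finPS: "finite PS" by (rule finite_subset[of _ UNIV]) auto
    define s where "s = (\<Sum>Pt\<in>PS. complexity a b theta (U/2) Pt)"
    show ?thesis
    proof (cases "s = \<infinity>")
      case True
      have "mdl_cost P a b (U/2) phi theta = \<infinity>"
        unfolding mdl_cost_def Let_def PS_def[symmetric] s_def[symmetric] using True by (rule if_P)
      then show ?thesis by simp
    next
      case False
      have nf: "complexity a b theta (U/2) Pt \<noteq> \<infinity>" if "Pt \<in> PS" for Pt
      proof
        assume inf: "complexity a b theta (U/2) Pt = \<infinity>"
        have "s = complexity a b theta (U/2) Pt + (\<Sum>Q\<in>PS - {Pt}. complexity a b theta (U/2) Q)"
          unfolding s_def using finPS that by (simp add: sum.remove)
        then show False using False inf by simp
      qed
      have exal: "\<exists>al. robust a b theta (U/2) Pt al \<and>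
                    complexity a b theta (U/2) Pt = enat (rep_set_size a b Pt al)" if "Pt \<in> PS" for Pt
      proof -
        let ?A = "{enat (rep_set_size a b Pt alpha) | alpha. robust a b theta (U/2) Pt alpha}"
        have "?A \<noteq> {}"
        proof
          assume "?A = {}"
          then have "complexity a b theta (U/2) Pt = \<infinity>" unfolding complexity_def
            by (simp add: Inf_enat_def)
          then show False using nf that by blast
        qed
        then have "Inf ?A \<in> ?A" by (rule enat_Inf_attained)
        then show ?thesis unfolding complexity_def by blast
      qed
      define al where "al Pt = (SOME al. robust a b theta (U/2) Pt al \<and>
                    complexity a b theta (U/2) Pt = enat (rep_set_size a b Pt al))" for Pt
      have alP: "robust a b theta (U/2) Pt (al Pt) \<and>
                    complexity a b theta (U/2) Pt = enat (rep_set_size a b Pt (al Pt))" if "Pt \<in> PS" for Pt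
        unfolding al_def using exal[OF that] by (rule someI_ex)
      have sval: "s = enat (\<Sum>Pt\<in>PS. rep_set_size a b Pt (al Pt))"
      proof -
        have "s = (\<Sum>Pt\<in>PS. enat (rep_set_size a b Pt (al Pt)))"
          unfolding s_def using alP by (intro sum.cong) auto
        also have "\<dots> = enat (\<Sum>Pt\<in>PS. rep_set_size a b Pt (al Pt))"
          using finPS by (induction PS rule: finite_induct) (auto simp: zero_enat_def)
        finally show ?thesis .
      qed
      define G where "G Pt = PiE Pt (\<lambda>k. {..<quant_num a b (al Pt k)})" for Pt
      define S where "S = (\<Union>Pt\<in>PS. (\<lambda>f. theta (grid a b Pt (al Pt) f)) ` G Pt)"
      have finG: "finite (G Pt)" for Pt unfolding G_def by (intro finite_PiE) auto
      have finS: "finite S" unfolding S_def using finPS finG by auto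
      have "card S \<le> (\<Sum>Pt\<in>PS. card ((\<lambda>f. theta (grid a b Pt (al Pt) f)) ` G Pt))"
        unfolding S_def by (rule card_UN_le[OF finPS])
      also have "\<dots> \<le> (\<Sum>Pt\<in>PS. card (G Pt))" by (intro sum_mono card_image_le finG)
      also have "\<dots> = (\<Sum>Pt\<in>PS. rep_set_size a b Pt (al Pt))"
        unfolding G_def rep_set_size_def by (intro sum.cong refl) (simp add: card_PiE)
      finally have cardS: "card S \<le> the_enat s" unfolding sval by simp
      obtain zpre :: "real^'d \<Rightarrow> real^'k" where zp: "\<And>x. phi x = (\<chi> k. spec_clip a b (zpre x $ k))"
        using enc unfolding spectrum_encoder_def by blast
      have cov: "\<exists>y\<in>S. norm (x - y) \<le> U" if xs: "x \<in> samples P" for x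
      proof -
        define Pt where "Pt = spiking_pattern a (phi x)"
        have PtPS: "Pt \<in> PS" unfolding PS_def Pt_def using xs by blast
        have pres: "preserved a b Pt (phi x)"
          unfolding preserved_def Pt_def spiking_pattern_def zp
          using assms(5,6) by (auto simp: spec_clip_def)
        obtain f where f: "f \<in> G Pt" "norm (theta (phi x) - theta (grid a b Pt (al Pt) f)) \<le> U/2"
          using cover[OF conjunct1[OF alP[OF PtPS]] pres assms(6)] unfolding G_def by blast
        have "norm (x - theta (phi x)) \<le> U/2" using comp xs unfolding ess_compatible_def by blast
        then have "norm (x - theta (grid a b Pt (al Pt) f)) \<le> U"
          using f(2) norm_triangle_ineq[of "x - theta (phi x)" "theta (phi x) - theta (grid a b Pt (al Pt) f)"]
          by simp
        moreover have "theta (grid a b Pt (al Pt) f) \<in> S" unfolding S_def using PtPS f(1) by blast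
        ultimately show ?thesis by blast
      qed
      have ess: "essence P U \<le> the_enat s"
      proof -
        have "essence P U \<le> card S" unfolding essence_def
          by (rule Least_le) (use finS cov in blast)
        then show ?thesis using cardS by simp
      qed
      have lg: "log 2 (real (essence P U)) \<le> log 2 (real (the_enat s))"
      proof (cases "essence P U = 0")
        case True
        then have "log 2 (real (essence P U)) = 0" by (simp add: log_def)
        moreover have "0 \<le> log 2 (real (the_enat s))"
        proof (cases "the_enat s = 0")
          case True then show ?thesis by (simp add: log_def)
        next
          case False
          then have "1 \<le> real (the_enat s)" by simp
          then show ?thesis by (simp add: log_def divide_nonneg_pos ln_ge_zero)
        qed
        ultimately show ?thesis by simp
      next
        case False
        have "0 < real (essence P U)" using False by simp
        moreover have "real (essence P U) \<le> real (the_enat s)" using ess by simp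
        ultimately show ?thesis by (subst log_le_cancel_iff) auto
      qed
      have "mdl_cost P a b (U/2) phi theta = ereal (log 2 (real (the_enat s)))"
        unfolding mdl_cost_def Let_def PS_def[symmetric] s_def[symmetric] using False by (rule if_not_P)
      then show ?thesis using lg by simp
    qed
  qed
  note main = this
  show ?thesis unfolding MDL_dagger_def
  proof (rule Inf_greatest)
    fix m assume "m \<in> {mdl_cost P a b (U/2) phi theta | (phi :: real^'d \<Rightarrow> real^'k) theta.
            spectrum_encoder a b phi \<and> ess_compatible P (U/2) phi theta}"
    then obtain phi :: "real^'d \<Rightarrow> real^'k" and theta where
      "m = mdl_cost P a b (U/2) phi theta" "spectrum_encoder a b phi" "ess_compatible P (U/2) phi theta"
      by blast
    then show "ereal (log 2 (real (essence P U))) \<le> m" using main by blast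
  qed
qed

end
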